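(* Let $P$ and $Q$ be $[0,1]$-valued random variables, where under the null hypothesis $H_0$, $P$ is a valid p-value ($\Pr(P\le s)\le s$ for all $s\in[0,1]$) and $Q$ has density $f$ on $[0,1]$. Let $\ell_f := \inf_{q \in [0,1]} f(q)$ and $\eta \in [0,1]$. Let $T\in\{0,1\}$ be such that, conditionally on $(Q,P)$, $T \sim \mathrm{Bern}\big(1 - \eta \ell_f / f(Q)\big)$, and define $$\tilde P^{\mathrm{density}} := T\,P + (1-T)\,Q.$$ Then, under $H_0$, for every $s\in[0,1]$, $$\Pr(\tilde P^{\mathrm{density}} \le s) = \Pr(P \le s) + \eta \ell_f\Big(s - \int_0^1 \Pr(P \le s \mid Q = q)\, dq\Big).$$ Consequently, when $P$ and $Q$ are independent, $\tilde P^{\mathrm{density}}$ is a valid p-value, and it is exactly $\mathrm{Uniform}[0,1]$ if $P$ is exactly $\mathrm{Uniform}[0,1]$, regardless of the distribution of $Q$.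
   Context: $T$ is drawn based on $Q$ using additional independent randomness. $Q$ is a "proxy" p-value with no validity assumption; its null density $f$ is assumed known. *)

theory Defs
  imports "HOL-Probability.Probability"
begin

definition lowf :: "(real \<Rightarrow> real) \<Rightarrow> real" where
  "lowf f = (INF q\<in>{0..1}. f q)"

end

theory Submission
  imports Defs
begin

lemma L2:
  fixes M :: "'a measure" and Q :: "'a \<Rightarrow> real"
  assumes M: "prob_space M" and Q_rv[measurable]: "Q \<in> borel_measurable M"
    and A[measurable]: "A \<in> sets M"
    and F[measurable]: "F \<in> borel_measurable borel" and F0: "\<And>q. F q \<ge> 0"
    and Fint: "integrable lborel F"
    and G[measurable]: "G \<in> borel_measurable borel" and G01: "\<And>q. G q \<in> {0..1}"
    and cond: "\<And>B. B \<in> sets borel \<Longrightarrow> measure M {\<omega>\<in>space M. \<omega> \<in> A \<and> Q \<omega> \<in> B}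
        = (\<integral>q. indicator B q * (G q * F q) \<partial>lborel)"
    and h[measurable]: "h \<in> borel_measurable borel"
  shows "(\<integral>\<omega>. indicator A \<omega> * h (Q \<omega>) \<partial>M) = (\<integral>q. G q * F q * h q \<partial>lborel)"
proof -
  interpret prob_space M by (rule M)
  define MA where "MA = density M (\<lambda>\<omega>. ennreal (indicator A \<omega>))"
  have QMA[measurable]: "Q \<in> borel_measurable MA" unfolding MA_def by simp
  have GFint: "integrable lborel (\<lambda>q. indicator B q * (G q * F q))" if "B \<in> sets borel" for B
  proof (rule Bochner_Integration.integrable_bound[OF Fint])
    show "(\<lambda>q. indicator B q * (G q * F q)) \<in> borel_measurable lborel"
      using that by measurable
    have "norm (indicator B q * (G q * F q)) \<le> norm (F q)" for q
    proof -
      have "G q * F q \<le> F q" using G01[of q] F0[of q] by (simp add: mult_left_le_one_le)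
      then show ?thesis using G01[of q] F0[of q] by (cases "q \<in> B") auto
    qed
    then show "AE q in lborel. norm (indicator B q * (G q * F q)) \<le> norm (F q)" by simp
  qed
  have eq: "distr MA lborel Q = density lborel (\<lambda>q. ennreal (G q * F q))"
  proof (rule measure_eqI)
    show "sets (distr MA lborel Q) = sets (density lborel (\<lambda>q. ennreal (G q * F q)))" by simp
  next
    fix B assume "B \<in> sets (distr MA lborel Q)"
    then have B[measurable]: "B \<in> sets borel" by simp
    have "emeasure (distr MA lborel Q) B = emeasure MA (Q -` B \<inter> space MA)"
      by (simp add: emeasure_distr)
    also have "\<dots> = (\<integral>\<^sup>+\<omega>. indicator {\<omega>\<in>space M. \<omega> \<in> A \<and> Q \<omega> \<in> B} \<omega> \<partial>M)"
      unfolding MA_def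
      apply (subst emeasure_density)
        apply simp
       apply (simp add: sets_density)
      apply (rule nn_integral_cong)
      apply (simp add: indicator_def)
      done
    also have "\<dots> = emeasure M {\<omega>\<in>space M. \<omega> \<in> A \<and> Q \<omega> \<in> B}"
      by (rule nn_integral_indicator) measurable
    also have "\<dots> = ennreal (measure M {\<omega>\<in>space M. \<omega> \<in> A \<and> Q \<omega> \<in> B})"
      by (simp add: emeasure_eq_measure)
    also have "\<dots> = ennreal (\<integral>q. indicator B q * (G q * F q) \<partial>lborel)" by (simp add: cond)
    also have "\<dots> = (\<integral>\<^sup>+q. ennreal (indicator B q * (G q * F q)) \<partial>lborel)"
      apply (rule nn_integral_eq_integral[symmetric, OF GFint[OF B]])
      using G01 F0 by (auto intro!: AE_I2)
    also have "\<dots> = emeasure (density lborel (\<lambda>q. ennreal (G q * F q))) B"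
      by (subst emeasure_density) (auto intro!: nn_integral_cong simp: indicator_def)
    finally show "emeasure (distr MA lborel Q) B = emeasure (density lborel (\<lambda>q. ennreal (G q * F q))) B" .
  qed
  have "(\<integral>\<omega>. indicator A \<omega> * h (Q \<omega>) \<partial>M) = (\<integral>\<omega>. h (Q \<omega>) \<partial>MA)"
    unfolding MA_def by (subst integral_real_density) auto
  also have "\<dots> = (\<integral>q. h q \<partial>distr MA lborel Q)"
    by (subst integral_distr) auto
  also have "\<dots> = (\<integral>q. G q * F q * h q \<partial>lborel)"
    unfolding eq using G01 F0 by (subst integral_real_density) (auto intro!: AE_I2)
  finally show ?thesis .
qed


theorem proposition3:
  fixes M :: "'a measure"
    and P Q T :: "'a \<Rightarrow> real"
    and f :: "real \<Rightarrow> real"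
    and g :: "real \<Rightarrow> real \<Rightarrow> real"
    and \<eta> :: real
  assumes M: "prob_space M"
    and P_rv: "P \<in> borel_measurable M" and Q_rv: "Q \<in> borel_measurable M"
    and T_rv: "T \<in> borel_measurable M"
    and P_range: "\<And>\<omega>. \<omega> \<in> space M \<Longrightarrow> P \<omega> \<in> {0..1}"
    and Q_range: "\<And>\<omega>. \<omega> \<in> space M \<Longrightarrow> Q \<omega> \<in> {0..1}"
    and T_range: "\<And>\<omega>. \<omega> \<in> space M \<Longrightarrow> T \<omega> \<in> {0, 1}"
    and P_valid: "\<And>s. s \<in> {0..1} \<Longrightarrow>
        measure M {\<omega> \<in> space M. P \<omega> \<le> s} \<le> s"
    and f_nonneg: "\<And>q. f q \<ge> 0"
    and Q_density: "distributed M lborel Q (\<lambda>q. ennreal (f q) * indicator {0..1} q)"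
    and eta: "\<eta> \<in> {0..1}"
    and T_cond: "\<And>C. C \<in> sets (borel :: (real \<times> real) measure) \<Longrightarrow>
        measure M {\<omega> \<in> space M. T \<omega> = 1 \<and> (Q \<omega>, P \<omega>) \<in> C}
        = prob_space.expectation M
            (\<lambda>\<omega>. (1 - \<eta> * lowf f / f (Q \<omega>)) * indicator C (Q \<omega>, P \<omega>))"
    and g_meas: "\<And>s. g s \<in> borel_measurable borel"
    and g_range: "\<And>s q. g s q \<in> {0..1}"
    and g_cond: "\<And>s B. B \<in> sets borel \<Longrightarrow>
        measure M {\<omega> \<in> space M. P \<omega> \<le> s \<and> Q \<omega> \<in> B}
        = (\<integral>q\<in>B \<inter> {0..1}. g s q * f q \<partial>lborel)"
  shows "(\<forall>s\<in>{0..1}.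
            measure M {\<omega> \<in> space M. T \<omega> * P \<omega> + (1 - T \<omega>) * Q \<omega> \<le> s}
            = measure M {\<omega> \<in> space M. P \<omega> \<le> s}
              + \<eta> * lowf f * (s - (\<integral>q\<in>{0..1}. g s q \<partial>lborel)))
       \<and> (prob_space.indep_var M borel P borel Q \<longrightarrow>
            (\<forall>s\<in>{0..1}.
               measure M {\<omega> \<in> space M. T \<omega> * P \<omega> + (1 - T \<omega>) * Q \<omega> \<le> s} \<le> s)
          \<and> ((\<forall>s\<in>{0..1}. measure M {\<omega> \<in> space M. P \<omega> \<le> s} = s) \<longrightarrow>
               (\<forall>s\<in>{0..1}.
                  measure M {\<omega> \<in> space M. T \<omega> * P \<omega> + (1 - T \<omega>) * Q \<omega> \<le> s} = s)))"
proof -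
  interpret prob_space M by (rule M)
  note [measurable] = P_rv Q_rv T_rv
  define F where "F q = f q * indicator {0..1} q" for q
  have F0: "F q \<ge> 0" for q using f_nonneg[of q] by (simp add: F_def)
  have dens_eq: "(\<lambda>q. ennreal (f q) * indicator {0..1} q) = (\<lambda>q. ennreal (F q))"
    by (auto simp: F_def indicator_def fun_eq_iff)
  have Fd: "distributed M lborel Q (\<lambda>q. ennreal (F q))" using Q_density by (simp only: dens_eq)
  have Fm[measurable]: "F \<in> borel_measurable borel"
    using distributed_real_measurable[OF _ Fd] F0 by simp
  have EQ: "(\<integral>\<omega>. h (Q \<omega>) \<partial>M) = (\<integral>q. F q * h q \<partial>lborel)"
    if [measurable]: "h \<in> borel_measurable borel" for h
    using distributed_integral[OF Fd, of h] F0 by simp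
  have Fint: "integrable lborel F"
  proof (rule integrableI_nonneg)
    show "F \<in> borel_measurable lborel" by simp
    show "AE x in lborel. 0 \<le> F x" using F0 by simp
    have "(\<integral>\<^sup>+x. ennreal (F x) * 1 \<partial>lborel) = (\<integral>\<^sup>+x. 1 \<partial>M)"
      using distributed_nn_integral[OF Fd, of "\<lambda>_. 1"] by simp
    then show "(\<integral>\<^sup>+x. ennreal (F x) \<partial>lborel) < \<infinity>" by (simp add: emeasure_space_1)
  qed
  have Fone: "(\<integral>q. F q \<partial>lborel) = 1" using EQ[of "\<lambda>_. 1"] by (simp add: prob_space)
  have QB: "measure M {\<omega>\<in>space M. \<omega> \<in> space M \<and> Q \<omega> \<in> B} = (\<integral>q. indicator B q * (1 * F q) \<partial>lborel)"
    if B[measurable]: "B \<in> sets borel" for B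
  proof -
    have "(\<integral>\<omega>. indicator B (Q \<omega>) \<partial>M) = (\<integral>\<omega>. indicator {\<omega>\<in>space M. \<omega> \<in> space M \<and> Q \<omega> \<in> B} \<omega> \<partial>M)"
      by (rule Bochner_Integration.integral_cong) (auto simp: indicator_def)
    also have "\<dots> = measure M {\<omega>\<in>space M. \<omega> \<in> space M \<and> Q \<omega> \<in> B}"
      by (simp add: Int_absorb2)
    finally show ?thesis using EQ[of "indicator B"] by (simp add: mult.commute)
  qed
  have QB': "measure M {\<omega>\<in>space M. Q \<omega> \<in> B} = (\<integral>q. indicator B q * F q \<partial>lborel)"
    if "B \<in> sets borel" for B using QB[OF that] by simp
  have bdd: "bdd_below (f ` {0..1})" unfolding bdd_below_def using f_nonneg by auto
  have lowf_le: "lowf f \<le> f q" if "q \<in> {0..1}" for q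
    unfolding lowf_def using bdd that by (rule cINF_lower)
  have lowf0: "lowf f \<ge> 0" unfolding lowf_def using f_nonneg by (intro cINF_greatest) auto
  have lowf1: "lowf f \<le> 1"
  proof -
    have "(\<integral>q. lowf f * indicator {0..1::real} q \<partial>lborel) \<le> (\<integral>q. F q \<partial>lborel)"
    proof (rule Bochner_Integration.integral_mono'[of lborel F, OF Fint])
      fix q show "lowf f * indicator {0..1} q \<le> F q"
        using lowf_le[of q] lowf0 by (auto simp: F_def indicator_def)
      show "0 \<le> F q" by (rule F0)
    qed
    then show ?thesis using Fone by simp
  qed
  define k where "k = \<eta> * lowf f"
  have k0: "k \<ge> 0" and k1: "k \<le> 1" using eta lowf0 lowf1 by (auto simp: k_def mult_le_one)
  have Pt_meas[measurable]: "{\<omega> \<in> space M. T \<omega> * P \<omega> + (1 - T \<omega>) * Q \<omega> \<le> s} \<in> sets M" for s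
    by measurable
  have A_meas[measurable]: "{\<omega> \<in> space M. P \<omega> \<le> s} \<in> sets M" for s by measurable
  have c01: "measure M {\<omega> \<in> space M. P \<omega> \<le> s} \<in> {0..1}" for s by simp
  define Ig where "Ig s = (\<integral>q\<in>{0..1}. g s q \<partial>lborel)" for s
  have case0: "measure M {\<omega> \<in> space M. T \<omega> * P \<omega> + (1 - T \<omega>) * Q \<omega> \<le> s}
      = measure M {\<omega> \<in> space M. P \<omega> \<le> s}" if "k = 0" for s
  proof -
    have "measure M {\<omega>\<in>space M. T \<omega> = 1 \<and> (Q \<omega>, P \<omega>) \<in> UNIV}
      = expectation (\<lambda>\<omega>. (1 - \<eta> * lowf f / f (Q \<omega>)) * indicator UNIV (Q \<omega>, P \<omega>))"
      by (rule T_cond) simp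
    moreover have z: "\<eta> * lowf f = 0" using that by (simp add: k_def)
    ultimately have "prob {\<omega>\<in>space M. T \<omega> = 1} = 1" unfolding z by (simp add: prob_space)
    then have ae: "AE \<omega> in M. \<omega> \<in> {\<omega>\<in>space M. T \<omega> = 1}" by (rule AE_prob_1)
    show ?thesis
      by (rule finite_measure_eq_AE) (use ae in \<open>auto\<close>)
  qed
  have casep: "measure M {\<omega> \<in> space M. T \<omega> * P \<omega> + (1 - T \<omega>) * Q \<omega> \<le> s}
      = measure M {\<omega> \<in> space M. P \<omega> \<le> s} + k * (s - Ig s)
     \<and> (prob_space.indep_var M borel P borel Q \<longrightarrow> Ig s = measure M {\<omega> \<in> space M. P \<omega> \<le> s})"
    if kp: "k > 0" and s: "s \<in> {0..1}" for s
  proof -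
    have lp: "lowf f > 0" using kp lowf0 eta by (auto simp: k_def zero_less_mult_iff)
    have Fpos: "F q > 0" if "q \<in> {0..1}" for q
      using lowf_le[OF that] lp that by (simp add: F_def)
    have fnz: "f q \<noteq> 0" if "0 \<le> q" "q \<le> 1" for q
      using Fpos[of q] that by (simp add: F_def)
    have FQ: "f (Q \<omega>) = F (Q \<omega>)" "F (Q \<omega>) \<ge> lowf f" if "\<omega> \<in> space M" for \<omega>
      using Q_range[OF that] lowf_le[OF Q_range[OF that]] by (auto simp: F_def)
    have invb: "norm (1 / F (Q \<omega>)) \<le> 1 / lowf f" if "\<omega> \<in> space M" for \<omega>
      using FQ[OF that] lp by (simp add: divide_left_mono)
    have Tc: "measure M {\<omega>\<in>space M. T \<omega> = 1 \<and> (Q \<omega>, P \<omega>) \<in> C}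
        = measure M {\<omega>\<in>space M. (Q \<omega>, P \<omega>) \<in> C}
          - k * (\<integral>\<omega>. indicator {\<omega>\<in>space M. (Q \<omega>, P \<omega>) \<in> C} \<omega> * (1 / F (Q \<omega>)) \<partial>M)"
      if C[measurable]: "C \<in> sets borel" for C
    proof -
      let ?E = "{\<omega>\<in>space M. (Q \<omega>, P \<omega>) \<in> C}"
      have E[measurable]: "?E \<in> sets M" by measurable
      have i1: "integrable M (\<lambda>\<omega>. indicator ?E \<omega> :: real)"
        by (rule integrable_const_bound[where B=1]) (auto split: split_indicator)
      have i2: "integrable M (\<lambda>\<omega>. indicator ?E \<omega> * (1 / F (Q \<omega>)))"
      proof (rule integrable_const_bound[where B="1 / lowf f"])
        show "AE \<omega> in M. norm (indicator ?E \<omega> * (1 / F (Q \<omega>))) \<le> 1 / lowf f"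
          using invb lp by (auto intro!: AE_I2 split: split_indicator)
      qed measurable
      have "measure M {\<omega>\<in>space M. T \<omega> = 1 \<and> (Q \<omega>, P \<omega>) \<in> C}
          = expectation (\<lambda>\<omega>. (1 - \<eta> * lowf f / f (Q \<omega>)) * indicator C (Q \<omega>, P \<omega>))"
        by (rule T_cond[OF C])
      also have "\<dots> = expectation (\<lambda>\<omega>. indicator ?E \<omega> - k * (indicator ?E \<omega> * (1 / F (Q \<omega>))))"
        by (rule Bochner_Integration.integral_cong) (auto simp: k_def FQ split: split_indicator)
      also have "\<dots> = expectation (\<lambda>\<omega>. indicator ?E \<omega>) - k * (\<integral>\<omega>. indicator ?E \<omega> * (1 / F (Q \<omega>)) \<partial>M)"
        by (simp only: Bochner_Integration.integral_diff[OF i1 integrable_mult_right[OF i2]] integral_mult_right_zero)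
      also have "expectation (\<lambda>\<omega>. indicator ?E \<omega>) = measure M ?E"
        by (simp add: Int_absorb2)
      finally show ?thesis .
    qed
    define A where "A = {\<omega> \<in> space M. P \<omega> \<le> s}"
    define Bq where "Bq = {\<omega> \<in> space M. Q \<omega> \<le> s}"
    have A[measurable]: "A \<in> sets M" and Bq[measurable]: "Bq \<in> sets M" by (auto simp: A_def Bq_def)
    define J where "J = (\<integral>\<omega>. indicator A \<omega> * (1 / F (Q \<omega>)) \<partial>M)"
    have C1[measurable]: "{x::real\<times>real. snd x \<le> s} \<in> sets borel"
      by (intro borel_closed closed_Collect_le continuous_intros)
    have C2[measurable]: "{x::real\<times>real. fst x \<le> s} \<in> sets borel"
      by (intro borel_closed closed_Collect_le continuous_intros)
    have t1: "measure M {\<omega>\<in>space M. T \<omega> = 1 \<and> P \<omega> \<le> s} = measure M A - k * J"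
      using Tc[OF C1] by (simp add: A_def J_def)
    have "measure M {\<omega>\<in>space M. T \<omega> = 1 \<and> Q \<omega> \<le> s} = measure M Bq
        - k * (\<integral>\<omega>. indicator Bq \<omega> * (1 / F (Q \<omega>)) \<partial>M)"
      using Tc[OF C2] by (simp add: Bq_def)
    also have "(\<integral>\<omega>. indicator Bq \<omega> * (1 / F (Q \<omega>)) \<partial>M)
        = (\<integral>\<omega>. indicator (space M) \<omega> * (indicator {..s} (Q \<omega>) * (1 / F (Q \<omega>))) \<partial>M)"
      by (rule Bochner_Integration.integral_cong) (auto simp: Bq_def split: split_indicator)
    also have "\<dots> = (\<integral>q. 1 * F q * (indicator {..s} q * (1 / F q)) \<partial>lborel)"
      by (rule L2[OF M Q_rv _ Fm F0 Fint]) (auto simp: QB')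
    also have "\<dots> = (\<integral>q. indicator {0..s} q \<partial>lborel)"
      using Fpos s by (intro Bochner_Integration.integral_cong) (auto simp: F_def fnz split: split_indicator)
    also have "\<dots> = s" using s by simp
    finally have t2: "measure M {\<omega>\<in>space M. T \<omega> = 1 \<and> Q \<omega> \<le> s} = measure M Bq - k * s" .
    have u1: "{\<omega> \<in> space M. T \<omega> * P \<omega> + (1 - T \<omega>) * Q \<omega> \<le> s}
        = {\<omega>\<in>space M. T \<omega> = 1 \<and> P \<omega> \<le> s} \<union> {\<omega>\<in>space M. T \<omega> \<noteq> 1 \<and> Q \<omega> \<le> s}"
      using T_range by fastforce
    have u2: "Bq = {\<omega>\<in>space M. T \<omega> = 1 \<and> Q \<omega> \<le> s} \<union> {\<omega>\<in>space M. T \<omega> \<noteq> 1 \<and> Q \<omega> \<le> s}"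
      by (auto simp: Bq_def)
    have m1: "measure M {\<omega> \<in> space M. T \<omega> * P \<omega> + (1 - T \<omega>) * Q \<omega> \<le> s}
        = measure M {\<omega>\<in>space M. T \<omega> = 1 \<and> P \<omega> \<le> s} + measure M {\<omega>\<in>space M. T \<omega> \<noteq> 1 \<and> Q \<omega> \<le> s}"
      unfolding u1 by (rule finite_measure_Union) auto
    have m2: "measure M Bq
        = measure M {\<omega>\<in>space M. T \<omega> = 1 \<and> Q \<omega> \<le> s} + measure M {\<omega>\<in>space M. T \<omega> \<noteq> 1 \<and> Q \<omega> \<le> s}"
      unfolding u2 by (rule finite_measure_Union) auto
    have gc: "measure M {\<omega>\<in>space M. \<omega> \<in> A \<and> Q \<omega> \<in> B} = (\<integral>q. indicator B q * (g s q * F q) \<partial>lborel)"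
      if [measurable]: "B \<in> sets borel" for B
    proof -
      have "measure M {\<omega>\<in>space M. \<omega> \<in> A \<and> Q \<omega> \<in> B} = measure M {\<omega> \<in> space M. P \<omega> \<le> s \<and> Q \<omega> \<in> B}"
        by (simp add: A_def)
      also have "\<dots> = (\<integral>q\<in>B \<inter> {0..1}. g s q * f q \<partial>lborel)" by (rule g_cond) simp
      also have "\<dots> = (\<integral>q. indicator B q * (g s q * F q) \<partial>lborel)"
        unfolding set_lebesgue_integral_def
        by (rule Bochner_Integration.integral_cong) (auto simp: F_def fnz split: split_indicator)
      finally show ?thesis .
    qed
    have "J = (\<integral>q. g s q * F q * (1 / F q) \<partial>lborel)"
      unfolding J_def using g_range
      by (intro L2[OF M Q_rv A Fm F0 Fint g_meas _ gc]) auto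
    also have "\<dots> = Ig s"
      unfolding Ig_def set_lebesgue_integral_def
      using Fpos by (intro Bochner_Integration.integral_cong) (auto simp: F_def fnz split: split_indicator)
    finally have JI: "J = Ig s" .
    have part1: "measure M {\<omega> \<in> space M. T \<omega> * P \<omega> + (1 - T \<omega>) * Q \<omega> \<le> s}
      = measure M {\<omega> \<in> space M. P \<omega> \<le> s} + k * (s - Ig s)"
      using m1 m2 t1 t2 JI by (simp add: A_def algebra_simps)
    have part2: "Ig s = measure M A" if ind: "prob_space.indep_var M borel P borel Q"
    proof -
      define c where "c = measure M A"
      have cc: "measure M {\<omega>\<in>space M. \<omega> \<in> A \<and> Q \<omega> \<in> B} = (\<integral>q. indicator B q * (c * F q) \<partial>lborel)"
        if B[measurable]: "B \<in> sets borel" for B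
      proof -
        have "prob ((\<lambda>x. (P x, Q x)) -` ({..s} \<times> B) \<inter> space M) = prob (P -` {..s} \<inter> space M) * prob (Q -` B \<inter> space M)"
          by (rule indep_varD[OF ind]) auto
        moreover have "(\<lambda>x. (P x, Q x)) -` ({..s} \<times> B) \<inter> space M = {\<omega>\<in>space M. \<omega> \<in> A \<and> Q \<omega> \<in> B}"
          by (auto simp: A_def)
        moreover have "P -` {..s} \<inter> space M = A" by (auto simp: A_def)
        moreover have "Q -` B \<inter> space M = {\<omega>\<in>space M. \<omega> \<in> space M \<and> Q \<omega> \<in> B}" by auto
        ultimately have "measure M {\<omega>\<in>space M. \<omega> \<in> A \<and> Q \<omega> \<in> B} = c * (\<integral>q. indicator B q * (1 * F q) \<partial>lborel)"
          using QB[OF B] by (simp add: c_def)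
        then show ?thesis by (simp add: algebra_simps)
      qed
      have "J = (\<integral>q. c * F q * (1 / F q) \<partial>lborel)"
        unfolding J_def c_def
        by (rule L2[OF M Q_rv A Fm F0 Fint _ _ cc[unfolded c_def]]) auto
      also have "\<dots> = (\<integral>q. c * indicator {0..1::real} q \<partial>lborel)"
        using Fpos by (intro Bochner_Integration.integral_cong) (auto simp: F_def fnz split: split_indicator)
      also have "\<dots> = c" by simp
      finally show ?thesis using JI by (simp add: c_def)
    qed
    show ?thesis using part1 part2 by (simp add: A_def)
  qed
  have main: "measure M {\<omega> \<in> space M. T \<omega> * P \<omega> + (1 - T \<omega>) * Q \<omega> \<le> s}
      = measure M {\<omega> \<in> space M. P \<omega> \<le> s} + k * (s - Ig s)" if s: "s \<in> {0..1}" for s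
  proof (cases "k = 0")
    case True then show ?thesis using case0[OF True] by simp
  next
    case False then have "k > 0" using k0 by simp
    then show ?thesis using casep[OF _ s] by blast
  qed
  have indm: "measure M {\<omega> \<in> space M. T \<omega> * P \<omega> + (1 - T \<omega>) * Q \<omega> \<le> s}
      = measure M {\<omega> \<in> space M. P \<omega> \<le> s} + k * (s - measure M {\<omega> \<in> space M. P \<omega> \<le> s})"
    if s: "s \<in> {0..1}" and ind: "prob_space.indep_var M borel P borel Q" for s
  proof (cases "k = 0")
    case True then show ?thesis using case0[OF True] by simp
  next
    case False then have "k > 0" using k0 by simp
    then show ?thesis using casep[OF _ s] ind by auto
  qed
  have le: "c + k * (s - c) \<le> s" if "c \<le> s" for c s :: real
  proof -
    have "k * (s - c) \<le> s - c" using that k1 by (simp add: mult_left_le_one_le k0)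
    then show ?thesis by simp
  qed
  show ?thesis
  proof (intro conjI impI ballI)
    fix s :: real assume "s \<in> {0..1}"
    then show "measure M {\<omega> \<in> space M. T \<omega> * P \<omega> + (1 - T \<omega>) * Q \<omega> \<le> s}
            = measure M {\<omega> \<in> space M. P \<omega> \<le> s}
              + \<eta> * lowf f * (s - (\<integral>q\<in>{0..1}. g s q \<partial>lborel))"
      using main by (simp add: k_def Ig_def)
  next
    fix s :: real assume ind: "prob_space.indep_var M borel P borel Q" and s: "s \<in> {0..1}"
    show "measure M {\<omega> \<in> space M. T \<omega> * P \<omega> + (1 - T \<omega>) * Q \<omega> \<le> s} \<le> s"
      unfolding indm[OF s ind] by (rule le) (rule P_valid[OF s])
  next
    fix s :: real assume ind: "prob_space.indep_var M borel P borel Q" and s: "s \<in> {0..1}"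
      and u: "\<forall>s\<in>{0..1}. measure M {\<omega> \<in> space M. P \<omega> \<le> s} = s"
    show "measure M {\<omega> \<in> space M. T \<omega> * P \<omega> + (1 - T \<omega>) * Q \<omega> \<le> s} = s"
      unfolding indm[OF s ind] using u s by simp
  qed
qed

end
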